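(* For every even positive integer $k$ there exists a connected graph $G$ with exactly $k$ basis forced vertices and $|E(G)|=\frac{n(n-1)}{2}-2k$, where $n=|V(G)|$.
   Context: All graphs are finite and simple. For vertices $u,v$ of a connected graph $G$, $d(u,v)$ is the length of a shortest $u$–$v$ path. A set $R\subseteq V(G)$ is a resolving set if for all distinct $x,y\in V(G)$ there is $r\in R$ with $d(r,x)\neq d(r,y)$. The metric dimension $\dim(G)$ is the minimum cardinality of a resolving set, and a resolving set of cardinality $\dim(G)$ is a metric basis. A vertex is a basis forced vertex if it belongs to every metric basis of $G$. *)

theory Defs
  imports Main
begin

definition simple_graph :: "'a set \<Rightarrow> 'a set set \<Rightarrow> bool" where
  "simple_graph V E \<longleftrightarrow> finite V \<and> (\<forall>e\<in>E. e \<subseteq> V \<and> card e = 2)"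

definition is_walk :: "'a set \<Rightarrow> 'a set set \<Rightarrow> 'a list \<Rightarrow> bool" where
  "is_walk V E xs \<longleftrightarrow> xs \<noteq> [] \<and> set xs \<subseteq> V \<and>
     (\<forall>i. Suc i < length xs \<longrightarrow> {xs ! i, xs ! Suc i} \<in> E)"

definition walk_of_len :: "'a set \<Rightarrow> 'a set set \<Rightarrow> 'a \<Rightarrow> 'a \<Rightarrow> nat \<Rightarrow> bool" where
  "walk_of_len V E u v k \<longleftrightarrow>
     (\<exists>xs. is_walk V E xs \<and> hd xs = u \<and> last xs = v \<and> length xs = Suc k)"

definition connected_graph :: "'a set \<Rightarrow> 'a set set \<Rightarrow> bool" where
  "connected_graph V E \<longleftrightarrow> V \<noteq> {} \<and> (\<forall>u\<in>V. \<forall>v\<in>V. \<exists>k. walk_of_len V E u v k)"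

definition gdist :: "'a set \<Rightarrow> 'a set set \<Rightarrow> 'a \<Rightarrow> 'a \<Rightarrow> nat" where
  "gdist V E u v = (LEAST k. walk_of_len V E u v k)"

definition resolving_set :: "'a set \<Rightarrow> 'a set set \<Rightarrow> 'a set \<Rightarrow> bool" where
  "resolving_set V E R \<longleftrightarrow> R \<subseteq> V \<and>
     (\<forall>x\<in>V. \<forall>y\<in>V. x \<noteq> y \<longrightarrow> (\<exists>r\<in>R. gdist V E r x \<noteq> gdist V E r y))"

definition metric_dim :: "'a set \<Rightarrow> 'a set set \<Rightarrow> nat" where
  "metric_dim V E = (LEAST k. \<exists>R. resolving_set V E R \<and> card R = k)"

definition metric_basis :: "'a set \<Rightarrow> 'a set set \<Rightarrow> 'a set \<Rightarrow> bool" where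
  "metric_basis V E R \<longleftrightarrow> resolving_set V E R \<and> card R = metric_dim V E"

definition basis_forced :: "'a set \<Rightarrow> 'a set set \<Rightarrow> 'a \<Rightarrow> bool" where
  "basis_forced V E v \<longleftrightarrow> v \<in> V \<and> (\<forall>R. metric_basis V E R \<longrightarrow> v \<in> R)"

end

theory Submission
  imports Defs
begin


definition hadj :: "nat \<Rightarrow> nat \<Rightarrow> bool" where
  "hadj u v \<longleftrightarrow> (v = Suc u \<and> u mod 5 \<noteq> 0) \<or> (u = Suc v \<and> v mod 5 \<noteq> 0)"
definition VV :: "nat \<Rightarrow> nat set" where "VV m = {..5*m}"
definition HH :: "nat \<Rightarrow> nat set set" where
  "HH m = (\<lambda>x. {x, Suc x}) ` {x. x < 5*m \<and> x mod 5 \<noteq> 0}"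
definition EE :: "nat \<Rightarrow> nat set set" where
  "EE m = {e. e \<subseteq> VV m \<and> card e = 2} - HH m"
definition BB :: "nat \<Rightarrow> nat set" where
  "BB m = {x. x < 5*m \<and> (x mod 5 = 2 \<or> x mod 5 = 4)}"

lemma nb:
  "hadj r (5*i+1) \<longleftrightarrow> r = 5*i+2"
  "hadj r (5*i+2) \<longleftrightarrow> r = 5*i+1 \<or> r = 5*i+3"
  "hadj r (5*i+3) \<longleftrightarrow> r = 5*i+2 \<or> r = 5*i+4"
  "hadj r (5*i+4) \<longleftrightarrow> r = 5*i+3 \<or> r = 5*i+5"
  "hadj r (5*i+5) \<longleftrightarrow> r = 5*i+4"
  "hadj r 0 \<longleftrightarrow> False"
  "hadj 0 r \<longleftrightarrow> False"
  by (unfold hadj_def; presburger)+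

lemma hsym: "hadj u v = hadj v u" unfolding hadj_def by auto

lemma BBmem: "5*q+2 \<in> BB m \<longleftrightarrow> q < m" "5*q+4 \<in> BB m \<longleftrightarrow> q < m"
  unfolding BB_def mem_Collect_eq by presburger+

lemma sep1:
  fixes x y :: nat
  assumes xm: "x \<le> 5*m" and ym: "y \<le> 5*m" and ne: "x \<noteq> y" and xB: "x \<notin> BB m" and x0: "x \<noteq> 0"
  shows "\<exists>r\<in>BB m. hadj r x \<noteq> hadj r y"
proof -
  define q where "q = x div 5"
  have xq: "x = 5*q + x mod 5" unfolding q_def by simp
  have "x mod 5 = 0 \<or> x mod 5 = 1 \<or> x mod 5 = 3" using xm xB unfolding BB_def by auto
  moreover {
    assume s: "x mod 5 = 1"
    have x: "x = 5*q+1" using xq s by simp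
    have lt: "q < m" using x xm by simp
    have ?thesis
    proof (cases "y = 5*q+3")
      case True
      have "hadj (5*q+4) x \<noteq> hadj (5*q+4) y" unfolding x hsym[of "5*q+4" y] nb using True x by simp
      then show ?thesis using BBmem lt by blast
    next
      case False
      have "hadj (5*q+2) x \<noteq> hadj (5*q+2) y" unfolding x hsym[of "5*q+2" y] nb using False x ne by simp
      then show ?thesis using BBmem lt by blast
    qed }
  moreover {
    assume s: "x mod 5 = 3"
    have x: "x = 5*q+3" using xq s by simp
    have lt: "q < m" using x xm by simp
    have ?thesis
    proof (cases "y = 5*q+1")
      case True
      have "hadj (5*q+4) x \<noteq> hadj (5*q+4) y" unfolding x hsym[of "5*q+4" y] nb using True x by simp
      then show ?thesis using BBmem lt by blast
    next
      case False
      have "hadj (5*q+2) x \<noteq> hadj (5*q+2) y" unfolding x hsym[of "5*q+2" y] nb using False x ne by simp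
      then show ?thesis using BBmem lt by blast
    qed }
  moreover {
    assume s: "x mod 5 = 0"
    define p where "p = q - 1"
    have x: "x = 5*p+5" using xq s x0 unfolding p_def by (cases q) auto
    have lt: "p < m" using x xm by simp
    have ?thesis
    proof (cases "y = 5*p+3")
      case True
      have "hadj (5*p+2) x \<noteq> hadj (5*p+2) y" unfolding x hsym[of "5*p+2" y] nb using True x by simp
      then show ?thesis using BBmem lt by blast
    next
      case False
      have "hadj (5*p+4) x \<noteq> hadj (5*p+4) y" unfolding x hsym[of "5*p+4" y] nb using False x ne by simp
      then show ?thesis using BBmem lt by blast
    qed }
  ultimately show ?thesis by (elim disjE) simp_all
qed

lemma bool5a:
  fixes pa pb pc pd pe :: bool
  assumes "pa \<or> pb \<or> pc" "pa \<or> pc \<or> pd" "pa \<or> pb \<or> pd \<or> pe" "pb \<or> pc \<or> pe" "pc \<or> pd \<or> pe"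
  shows "2 \<le> (of_bool pa + of_bool pb + of_bool pc + of_bool pd + of_bool pe :: nat)"
  using assms by (cases pa; cases pb; cases pc; cases pd; cases pe) simp_all

lemma bool5b:
  fixes pa pb pc pd pe :: bool
  assumes "pa \<or> pb \<or> pc" "pa \<or> pc \<or> pd" "pa \<or> pb \<or> pd \<or> pe" "pb \<or> pc \<or> pe" "pc \<or> pd \<or> pe"
    "pa \<or> pb" "pb \<or> pc \<or> pd" "pd \<or> pe"
    "(of_bool pa + of_bool pb + of_bool pc + of_bool pd + of_bool pe :: nat) \<le> 2"
  shows "pb \<and> pd"
  using assms by (cases pa; cases pb; cases pc; cases pd; cases pe) simp_all


lemma hit: "(\<exists>r\<in>R. P r) \<Longrightarrow> (\<And>r. P r \<Longrightarrow> r \<in> S) \<Longrightarrow> R \<inter> S \<noteq> {}" by blast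

lemma edge:
  assumes "u \<in> VV m" "v \<in> VV m"
  shows "{u,v} \<in> EE m \<longleftrightarrow> u \<noteq> v \<and> \<not> hadj u v"
proof -
  have "{u,v} \<in> HH m \<longleftrightarrow> hadj u v"
    using assms unfolding HH_def hadj_def VV_def
    by (auto simp: doubleton_eq_iff)
  moreover have "{u,v} \<subseteq> VV m" using assms by auto
  moreover have "card {u,v} = 2 \<longleftrightarrow> u \<noteq> v" by (cases "u = v") auto
  ultimately show ?thesis unfolding EE_def by auto
qed

lemma sg: "simple_graph (VV m) (EE m)"
  unfolding simple_graph_def EE_def VV_def by auto

lemma walk0: "walk_of_len V E u v 0 \<longleftrightarrow> u \<in> V \<and> u = v"
  unfolding walk_of_len_def is_walk_def
  by (auto simp: length_Suc_conv intro!: exI[of _ "[u]"])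

lemma walk1: "walk_of_len V E u v (Suc 0) \<longleftrightarrow> u \<in> V \<and> v \<in> V \<and> {u,v} \<in> E"
proof
  assume "walk_of_len V E u v (Suc 0)"
  then obtain xs where "is_walk V E xs" "hd xs = u" "last xs = v" "length xs = 2"
    unfolding walk_of_len_def by auto
  then obtain a b where "xs = [a,b]" "{a,b} \<in> E" "a \<in> V" "b \<in> V"
    unfolding is_walk_def by (auto simp: length_Suc_conv numeral_2_eq_2)
  then show "u \<in> V \<and> v \<in> V \<and> {u,v} \<in> E" using \<open>hd xs = u\<close> \<open>last xs = v\<close> by auto
next
  assume "u \<in> V \<and> v \<in> V \<and> {u,v} \<in> E"
  then show "walk_of_len V E u v (Suc 0)"
    unfolding walk_of_len_def is_walk_def
    by (intro exI[of _ "[u,v]"]) (auto simp: less_Suc_eq)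
qed

lemma walk2: "u \<in> V \<Longrightarrow> w \<in> V \<Longrightarrow> v \<in> V \<Longrightarrow> {u,w} \<in> E \<Longrightarrow> {w,v} \<in> E \<Longrightarrow> walk_of_len V E u v 2"
  unfolding walk_of_len_def is_walk_def
  apply (intro exI[of _ "[u,w,v]"])
  apply (auto simp: less_Suc_eq numeral_2_eq_2)
  done

lemma gd:
  assumes "u \<in> VV m" "v \<in> VV m"
  shows "gdist (VV m) (EE m) u v = (if u = v then 0 else if hadj u v then 2 else 1)"
proof -
  have z: "0 \<in> VV m" by (simp add: VV_def)
  show ?thesis
  proof (cases "u = v")
    case True then show ?thesis using assms unfolding gdist_def by (simp add: walk0)
  next
    case ne: False
    show ?thesis
    proof (cases "hadj u v")
      case True
      have "u \<noteq> 0" "v \<noteq> 0" using True unfolding hadj_def by auto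
      then have "{u,0} \<in> EE m" "{0,v} \<in> EE m" using assms z by (auto simp: edge nb insert_commute)
      then have w: "walk_of_len (VV m) (EE m) u v 2" by (rule walk2[OF assms(1) z assms(2)])
      have "gdist (VV m) (EE m) u v = 2" unfolding gdist_def
      proof (rule Least_equality[of "walk_of_len (VV m) (EE m) u v"])
        show "walk_of_len (VV m) (EE m) u v 2" by (rule w)
      next
        fix y assume "walk_of_len (VV m) (EE m) u v y"
        then show "2 \<le> y" using ne True assms edge
          by (cases y; cases "y - 1") (auto simp: walk0 walk1)
      qed
      then show ?thesis using ne True by simp
    next
      case False
      have w: "walk_of_len (VV m) (EE m) u v 1" using assms ne False by (simp add: walk1 edge)
      have "gdist (VV m) (EE m) u v = 1" unfolding gdist_def
      proof (rule Least_equality[of "walk_of_len (VV m) (EE m) u v"])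
        show "walk_of_len (VV m) (EE m) u v 1" by (rule w)
      next
        fix y assume "walk_of_len (VV m) (EE m) u v y"
        then show "1 \<le> y" using ne by (cases y) (auto simp: walk0)
      qed
      then show ?thesis using ne False by simp
    qed
  qed
qed

lemma conn: "connected_graph (VV m) (EE m)"
  unfolding connected_graph_def
proof (intro conjI ballI)
  show "VV m \<noteq> {}" by (auto simp: VV_def)
  fix u v assume uv: "u \<in> VV m" "v \<in> VV m"
  have "gdist (VV m) (EE m) u v = (LEAST k. walk_of_len (VV m) (EE m) u v k)" by (simp add: gdist_def)
  have z: "0 \<in> VV m" by (simp add: VV_def)
  show "\<exists>k. walk_of_len (VV m) (EE m) u v k"
  proof (cases "u = v")
    case True then show ?thesis using uv by (intro exI[of _ 0]) (simp add: walk0)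
  next
    case ne: False
    show ?thesis
    proof (cases "hadj u v")
      case True
      have "u \<noteq> 0" "v \<noteq> 0" using True unfolding hadj_def by auto
      then have "{u,0} \<in> EE m" "{0,v} \<in> EE m" using uv z by (auto simp: edge nb insert_commute)
      then show ?thesis by (intro exI[of _ 2] walk2[OF uv(1) z uv(2)])
    next
      case False then show ?thesis using uv ne by (metis walk1 edge)
    qed
  qed
qed

lemma res_iff:
  "resolving_set (VV m) (EE m) R \<longleftrightarrow> R \<subseteq> VV m \<and>
     (\<forall>x\<in>VV m. \<forall>y\<in>VV m. x \<noteq> y \<longrightarrow> (\<exists>r\<in>R. r = x \<or> r = y \<or> hadj r x \<noteq> hadj r y))"
proof -
  have *: "gdist (VV m) (EE m) r x \<noteq> gdist (VV m) (EE m) r y \<longleftrightarrow> (r = x \<or> r = y \<or> hadj r x \<noteq> hadj r y)"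
    if "r \<in> VV m" "x \<in> VV m" "y \<in> VV m" "x \<noteq> y" for r x y
    using that by (simp add: gd)
  show ?thesis unfolding resolving_set_def
    apply (rule iffI)
     apply (clarsimp, metis * subsetD)
    apply (clarsimp, metis * subsetD)
    done
qed



lemma card5:
  assumes "distinct [a,b,c,d,e]"
  shows "card (R \<inter> {a,b,c,d,e}) = of_bool (a \<in> R) + of_bool (b \<in> R) + of_bool (c \<in> R)
     + of_bool (d \<in> R) + of_bool (e \<in> R)"
  using assms by (simp add: Int_insert_right card_insert_if)

lemma local_lem:
  assumes res: "\<forall>x\<in>VV m. \<forall>y\<in>VV m. x \<noteq> y \<longrightarrow> (\<exists>r\<in>R. r = x \<or> r = y \<or> hadj r x \<noteq> hadj r y)"
    and i: "i < m"
  shows "2 \<le> card (R \<inter> {5*i+1..5*i+5})"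
    and "0 \<notin> R \<Longrightarrow> card (R \<inter> {5*i+1..5*i+5}) \<le> 2 \<Longrightarrow> 5*i+2 \<in> R \<and> 5*i+4 \<in> R"
proof -
  have inV: "5*i+1 \<in> VV m" "5*i+2 \<in> VV m" "5*i+3 \<in> VV m" "5*i+4 \<in> VV m" "5*i+5 \<in> VV m" "0 \<in> VV m"
    using i by (auto simp: VV_def)
  have I: "{5*i+1..5*i+5} = {5*i+1, 5*i+2, 5*i+3, 5*i+4, 5*i+5}" by auto
  have C: "card (R \<inter> {5*i+1..5*i+5}) = of_bool (5*i+1 \<in> R) + of_bool (5*i+2 \<in> R) + of_bool (5*i+3 \<in> R)
     + of_bool (5*i+4 \<in> R) + of_bool (5*i+5 \<in> R)"
    unfolding I by (rule card5) simp
  have res': "\<exists>r\<in>R. r = x \<or> r = y \<or> hadj r x \<noteq> hadj r y" if "x \<in> VV m" "y \<in> VV m" "x \<noteq> y" for x y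
    using res that by blast
  have ab: "R \<inter> {5*i+1,5*i+2,5*i+3} \<noteq> {}" by (rule hit[OF res'[OF inV(1,2)]]; (unfold nb)?; auto)
  have ac: "R \<inter> {5*i+1,5*i+3,5*i+4} \<noteq> {}" by (rule hit[OF res'[OF inV(1,3)]]; (unfold nb)?; auto)
  have ae: "R \<inter> {5*i+1,5*i+2,5*i+4,5*i+5} \<noteq> {}" by (rule hit[OF res'[OF inV(1,5)]]; (unfold nb)?; auto)
  have ce: "R \<inter> {5*i+2,5*i+3,5*i+5} \<noteq> {}" by (rule hit[OF res'[OF inV(3,5)]]; (unfold nb)?; auto)
  have de: "R \<inter> {5*i+3,5*i+4,5*i+5} \<noteq> {}" by (rule hit[OF res'[OF inV(4,5)]]; (unfold nb)?; auto)
  show "2 \<le> card (R \<inter> {5*i+1..5*i+5})" unfolding C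
    by (rule bool5a) (use ab ac ae ce de in auto)
  assume z: "0 \<notin> R" and c2: "card (R \<inter> {5*i+1..5*i+5}) \<le> 2"
  have za: "R \<inter> {0,5*i+1,5*i+2} \<noteq> {}" by (rule hit[OF res'[OF inV(6,1)]]; (unfold nb)?; auto)
  have zc: "R \<inter> {0,5*i+2,5*i+3,5*i+4} \<noteq> {}" by (rule hit[OF res'[OF inV(6,3)]]; (unfold nb)?; auto)
  have ze: "R \<inter> {0,5*i+4,5*i+5} \<noteq> {}" by (rule hit[OF res'[OF inV(6,5)]]; (unfold nb)?; auto)
  show "5*i+2 \<in> R \<and> 5*i+4 \<in> R"
    by (rule bool5b) (use ab ac ae ce de za zc ze z c2 C in auto)
qed

lemma card_HH_base: "card {x::nat. x < 5*m \<and> x mod 5 \<noteq> 0} = 4*m"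
proof (induction m)
  case 0 then show ?case by simp
next
  case (Suc m)
  have "{x::nat. x < 5*Suc m \<and> x mod 5 \<noteq> 0} = {x. x < 5*m \<and> x mod 5 \<noteq> 0} \<union> {5*m+1,5*m+2,5*m+3,5*m+4}"
    by auto presburger+
  then show ?case using Suc by simp
qed

lemma card_BB: "card (BB m) = 2*m"
proof (induction m)
  case 0 then show ?case by (simp add: BB_def)
next
  case (Suc m)
  have "BB (Suc m) = BB m \<union> {5*m+2,5*m+4}"
    unfolding BB_def by auto presburger+
  then show ?case using Suc by (simp add: BB_def)
qed

lemma card_HH: "card (HH m) = 4*m"
proof -
  have "card (HH m) = card {x::nat. x < 5*m \<and> x mod 5 \<noteq> 0}"
    unfolding HH_def by (rule card_image) (auto simp: inj_on_def doubleton_eq_iff)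
  then show ?thesis using card_HH_base by simp
qed

lemma card_EE: "2 * card (EE m) + 4 * (2*m) = card (VV m) * (card (VV m) - 1)"
proof -
  let ?A = "{e. e \<subseteq> VV m \<and> card e = 2}"
  have fin: "finite (VV m)" by (simp add: VV_def)
  have cA: "card ?A = card (VV m) choose 2" using n_subsets[OF fin] by simp
  have sub: "HH m \<subseteq> ?A" unfolding HH_def VV_def by auto
  have finA: "finite ?A" using fin by (simp add: finite_subset[of _ "Pow (VV m)"] subset_iff)
  have "card (EE m) = card ?A - card (HH m)" unfolding EE_def by (rule card_Diff_subset[OF finite_subset[OF sub finA] sub])
  moreover have "card (HH m) \<le> card ?A" by (rule card_mono[OF finA sub])
  moreover have "2 * (card (VV m) choose 2) = card (VV m) * (card (VV m) - 1)"
  proof -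
    have "even (card (VV m) * (card (VV m) - 1))" by (cases "even (card (VV m))") auto
    then show ?thesis by (simp add: choose_two)
  qed
  ultimately show ?thesis using cA card_HH by simp
qed

lemma BB_sep:
  fixes x y :: nat
  assumes "x \<le> 5*m" "y \<le> 5*m" "x \<noteq> y" "x \<notin> BB m" "y \<notin> BB m"
  shows "\<exists>r\<in>BB m. hadj r x \<noteq> hadj r y"
proof (cases "x = 0")
  case False then show ?thesis using sep1 assms by blast
next
  case True
  then have "y \<noteq> 0" using assms by simp
  then obtain r where "r \<in> BB m" "hadj r y \<noteq> hadj r x" using sep1[of y m x] assms by auto
  then show ?thesis by metis
qed

lemma BB_res: "resolving_set (VV m) (EE m) (BB m)"
  unfolding res_iff
proof (intro conjI ballI impI)
  show "BB m \<subseteq> VV m" by (auto simp: BB_def VV_def)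
  fix x y assume xy: "x \<in> VV m" "y \<in> VV m" "x \<noteq> y"
  show "\<exists>r\<in>BB m. r = x \<or> r = y \<or> hadj r x \<noteq> hadj r y"
  proof (cases "x \<in> BB m \<or> y \<in> BB m")
    case True then show ?thesis by blast
  next
    case False then show ?thesis using BB_sep[of x m y] xy by (auto simp: VV_def)
  qed
qed

lemma lower:
  assumes "resolving_set (VV m) (EE m) R"
  shows "2*m \<le> card R" and "card R \<le> 2*m \<Longrightarrow> BB m \<subseteq> R"
proof -
  have R: "R \<subseteq> VV m" and res: "\<forall>x\<in>VV m. \<forall>y\<in>VV m. x \<noteq> y \<longrightarrow> (\<exists>r\<in>R. r = x \<or> r = y \<or> hadj r x \<noteq> hadj r y)"
    using assms unfolding res_iff by auto
  have finR: "finite R" using R finite_subset by (auto simp: VV_def)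
  define A where "A i = R \<inter> {5*i+1..5*i+5}" for i
  have U: "(\<Union>i\<in>{..<m}. A i) = R \<inter> {1..5*m}"
  proof
    show "(\<Union>i\<in>{..<m}. A i) \<subseteq> R \<inter> {1..5*m}" by (auto simp: A_def)
    show "R \<inter> {1..5*m} \<subseteq> (\<Union>i\<in>{..<m}. A i)"
    proof
      fix x assume x: "x \<in> R \<inter> {1..5*m}"
      then have "(x-1) div 5 < m" "x \<in> {5*((x-1) div 5)+1..5*((x-1) div 5)+5}" by auto
      then show "x \<in> (\<Union>i\<in>{..<m}. A i)" using x unfolding A_def by blast
    qed
  qed
  have S: "card (R \<inter> {1..5*m}) = (\<Sum>i<m. card (A i))"
    unfolding U[symmetric]
    by (rule card_UN_disjoint) (auto simp: A_def)
  have ge: "\<forall>i\<in>{..<m}. 2 \<le> card (A i)" using local_lem(1)[OF res] by (auto simp: A_def)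
  have "(\<Sum>i<m. 2) \<le> (\<Sum>i<m. card (A i))" using ge by (intro sum_mono) auto
  then have s2: "2*m \<le> card (R \<inter> {1..5*m})" using S by simp
  also have "\<dots> \<le> card R" using finR by (intro card_mono) auto
  finally show "2*m \<le> card R" .
  assume le: "card R \<le> 2*m"
  have z: "0 \<notin> R"
  proof
    assume "0 \<in> R"
    then have "insert 0 (R \<inter> {1..5*m}) \<subseteq> R" by auto
    then have "card (insert 0 (R \<inter> {1..5*m})) \<le> card R" using finR by (intro card_mono) auto
    then show False using s2 le finR by simp
  qed
  have eq2: "card (A i) \<le> 2" if "i < m" for i
  proof (rule ccontr)
    assume "\<not> card (A i) \<le> 2"
    then have "(\<Sum>i<m. 2) < (\<Sum>i<m. card (A i))" using ge that
      by (intro sum_strict_mono_ex1) (auto intro!: bexI[of _ i])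
    moreover have "card (R \<inter> {1..5*m}) \<le> card R" using finR by (intro card_mono) auto
    ultimately show False using S le by simp
  qed
  show "BB m \<subseteq> R"
  proof
    fix x assume "x \<in> BB m"
    then have x: "x < 5*m" "x mod 5 = 2 \<or> x mod 5 = 4" by (auto simp: BB_def)
    then have i: "x div 5 < m" by auto
    have "5*(x div 5)+2 \<in> R \<and> 5*(x div 5)+4 \<in> R"
      using local_lem(2)[OF res i z] eq2[OF i] by (simp add: A_def)
    moreover have "x = 5*(x div 5)+2 \<or> x = 5*(x div 5)+4" using x by presburger
    ultimately show "x \<in> R" by auto
  qed
qed

lemma mdim: "metric_dim (VV m) (EE m) = 2*m"
  unfolding metric_dim_def
  by (rule Least_equality) (use BB_res card_BB lower(1) in auto)

lemma basis_eq: "metric_basis (VV m) (EE m) R \<longleftrightarrow> R = BB m"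
proof
  assume "metric_basis (VV m) (EE m) R"
  then have r: "resolving_set (VV m) (EE m) R" "card R = 2*m" by (auto simp: metric_basis_def mdim)
  have "finite R" using r(1) unfolding resolving_set_def VV_def by (auto intro: finite_subset)
  from card_subset_eq[OF this lower(2)[OF r(1)]] r(2) card_BB show "R = BB m" by simp
next
  assume "R = BB m" then show "metric_basis (VV m) (EE m) R"
    by (simp add: metric_basis_def mdim BB_res card_BB)
qed

theorem corollary3:
  fixes k :: nat
  assumes "even k" and "k > 0"
  shows "\<exists>(V :: nat set) (E :: nat set set).
           simple_graph V E \<and> connected_graph V E \<and>
           card {v \<in> V. basis_forced V E v} = k \<and>
           2 * card E + 4 * k = card V * (card V - 1)"
proof -
  obtain m where k: "k = 2*m" using assms(1) by blast
  have F: "{v \<in> VV m. basis_forced (VV m) (EE m) v} = BB m"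
    unfolding basis_forced_def basis_eq by (auto simp: BB_def VV_def)
  show ?thesis
    by (intro exI[of _ "VV m"] exI[of _ "EE m"]) (use card_EE[of m] in \<open>simp add: sg conn F card_BB k\<close>)
qed

end
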